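(* The graph $T_9$ is a minimal non-word-representable graph: $T_9$ is not word-representable, but every graph obtained from $T_9$ by deleting one vertex is word-representable.
   Context: A graph $G=(V,E)$ is word-representable if there exists a word $w$ over the alphabet $V$ such that for all distinct $x,y\in V$, the letters $x$ and $y$ alternate in $w$ if and only if $xy\in E$ (alternation meaning that deleting all letters other than $x$ and $y$ leaves $xyxy\cdots$ or $yxyx\cdots$). The graph $T_9$ has vertex set $\{1,\dots,10\}$; the vertices $1,2,3,4,5$ form a clique, the vertices $6,7,8,9,10$ form an independent set, and the remaining edges are: $6$ is adjacent to $1,3$; $7$ is adjacent to $1,4$; $8$ is adjacent to $2,3$; $9$ is adjacent to $1,2,3,5$; $10$ is adjacent to $1,3,4,5$. *)

theory Defs
  imports Main
begin

definition alternate :: "'a list \<Rightarrow> 'a \<Rightarrow> 'a \<Rightarrow> bool" where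
  "alternate w x y \<longleftrightarrow>
     (let u = filter (\<lambda>z. z = x \<or> z = y) w in
        \<forall>i. Suc i < length u \<longrightarrow> u ! i \<noteq> u ! Suc i)"

definition word_representable :: "'a set \<Rightarrow> ('a \<Rightarrow> 'a \<Rightarrow> bool) \<Rightarrow> bool" where
  "word_representable V E \<longleftrightarrow>
     (\<exists>w. set w = V \<and>
        (\<forall>x\<in>V. \<forall>y\<in>V. x \<noteq> y \<longrightarrow> (alternate w x y \<longleftrightarrow> E x y)))"

definition T9_edges :: "(nat \<times> nat) set" where
  "T9_edges =
     {(a, b). a \<in> {1..5} \<and> b \<in> {1..5} \<and> a < b}
     \<union> {(1,6), (3,6), (1,7), (4,7), (2,8), (3,8),
        (1,9), (2,9), (3,9), (5,9), (1,10), (3,10), (4,10), (5,10)}"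

definition T9_V :: "nat set" where
  "T9_V = {1..10}"

definition T9_E :: "nat \<Rightarrow> nat \<Rightarrow> bool" where
  "T9_E x y \<longleftrightarrow> (x, y) \<in> T9_edges \<or> (y, x) \<in> T9_edges"

end

theory Submission
  imports Defs
begin


definition cnt :: "'a \<Rightarrow> 'a list \<Rightarrow> nat" where
  "cnt x xs = length (filter ((=) x) xs)"

definition BB :: "'a list \<Rightarrow> 'a \<Rightarrow> 'a \<Rightarrow> bool" where
  "BB w x y \<longleftrightarrow> (\<forall>n. cnt y (take n w) \<le> cnt x (take n w) \<and> cnt x (take n w) \<le> Suc (cnt y (take n w)))"

lemma cnt_Nil[simp]: "cnt x [] = 0" by (simp add: cnt_def)
lemma cnt_Cons[simp]: "cnt x (y # ys) = (if x = y then Suc (cnt x ys) else cnt x ys)" by (simp add: cnt_def)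

lemma cnt_append[simp]: "cnt x (xs @ ys) = cnt x xs + cnt x ys"
  by (simp add: cnt_def)

lemma cnt_filter: "P x \<Longrightarrow> cnt x (filter P xs) = cnt x xs"
  by (induction xs) auto

lemma filter_take_prefix: "filter P (take n w) = take (length (filter P (take n w))) (filter P w)"
proof -
  have "filter P w = filter P (take n w) @ filter P (drop n w)"
    by (simp flip: filter_append)
  then show ?thesis by (simp add: append_eq_conv_conj)
qed

lemma take_filter_ex: "\<exists>n. take k (filter P w) = filter P (take n w)"
proof (induction w arbitrary: k)
  case Nil
  then show ?case by simp
next
  case (Cons a w)
  show ?case
  proof (cases "P a")
    case True
    show ?thesis
    proof (cases k)
      case 0
      then show ?thesis by (rule_tac x=0 in exI) simp
    next
      case (Suc k')
      obtain n where "take k' (filter P w) = filter P (take n w)" using Cons by blast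
      then show ?thesis using True Suc by (rule_tac x="Suc n" in exI) simp
    qed
  next
    case False
    obtain n where "take k (filter P w) = filter P (take n w)" using Cons by blast
    then show ?thesis using False by (rule_tac x="Suc n" in exI) simp
  qed
qed

lemma parity:
  assumes "\<forall>i. Suc i < length u \<longrightarrow> u ! i \<noteq> u ! Suc i"
    and "set u \<subseteq> {x, y}"
  shows "i < length u \<Longrightarrow> (u ! i = u ! 0) \<longleftrightarrow> even i"
proof (induction i)
  case 0
  then show ?case by simp
next
  case (Suc i)
  have l: "Suc i < length u" "i < length u" "0 < length u" using Suc.prems by auto
  have a: "u ! i \<in> {x,y}" "u ! Suc i \<in> {x,y}" "u ! 0 \<in> {x,y}"
    using nth_mem[OF l(1)] nth_mem[OF l(2)] nth_mem[OF l(3)] assms(2) by blast+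
  have ne: "u ! i \<noteq> u ! Suc i" using assms(1) l(1) by blast
  have ih: "(u ! i = u ! 0) \<longleftrightarrow> even i" using Suc.IH l(2) by simp
  have d: "u ! i = x \<or> u ! i = y" "u ! Suc i = x \<or> u ! Suc i = y" "u ! 0 = x \<or> u ! 0 = y"
    using a by simp_all
  have "(u ! Suc i = u ! 0) \<longleftrightarrow> \<not> (u ! i = u ! 0)" using d ne by metis
  then show ?case using ih by simp
qed

lemma cnt_take_alt:
  assumes "\<forall>i<length u. (u ! i = x) \<longleftrightarrow> even i" "set u \<subseteq> {x, y}" "x \<noteq> y"
  shows "k \<le> length u \<Longrightarrow> cnt x (take k u) = (k + 1) div 2 \<and> cnt y (take k u) = k div 2"
proof (induction k)
  case 0
  then show ?case by (simp add: cnt_def)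
next
  case (Suc k)
  have t: "take (Suc k) u = take k u @ [u ! k]" using Suc.prems by (simp add: take_Suc_conv_app_nth)
  have "k < length u" using Suc.prems by simp
  then have "u ! k \<in> set u" by (rule nth_mem)
  then have "u ! k \<in> {x, y}" using assms(2) by blast
  moreover have e: "(u ! k = x) = even k" using assms(1) Suc.prems by simp
  ultimately show ?case
  proof (cases "even k")
    case True
    then obtain m where k: "k = 2 * m" by blast
    have ih: "cnt x (take k u) = m" "cnt y (take k u) = m" using Suc k by simp_all
    have "u ! k = x" using e True by simp
    have c1: "cnt x (take (Suc k) u) = Suc m" using ih t \<open>u ! k = x\<close> by simp
    have c2: "cnt y (take (Suc k) u) = m" using ih t \<open>u ! k = x\<close> assms(3) by simp
    show ?thesis using c1 c2 k by simp
  next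
    case False
    then obtain m where k: "k = 2 * m + 1" using oddE by blast
    have ih: "cnt x (take k u) = Suc m" "cnt y (take k u) = m" using Suc k by simp_all
    have "u ! k = y" using e False \<open>u ! k \<in> {x,y}\<close> by auto
    have c1: "cnt x (take (Suc k) u) = Suc m" using ih t \<open>u ! k = y\<close> assms(3) by simp
    have c2: "cnt y (take (Suc k) u) = Suc m" using ih t \<open>u ! k = y\<close> by simp
    show ?thesis using c1 c2 k by simp
  qed
qed


lemma alternate_sym: "alternate w x y = alternate w y x"
  unfolding alternate_def by (simp add: disj_commute)

lemma BB_start:
  assumes xy: "x \<noteq> y" and alt: "alternate w x y"
    and ne: "filter (\<lambda>z. z = x \<or> z = y) w \<noteq> []"
    and h: "filter (\<lambda>z. z = x \<or> z = y) w ! 0 = x"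
  shows "BB w x y"
proof -
  define P where "P = (\<lambda>z. z = x \<or> z = y)"
  define u where "u = filter P w"
  have adj: "\<forall>i. Suc i < length u \<longrightarrow> u ! i \<noteq> u ! Suc i"
    using alt unfolding alternate_def u_def P_def Let_def by blast
  have su: "set u \<subseteq> {x, y}" unfolding u_def P_def by auto
  have h0: "u ! 0 = x" using h unfolding u_def P_def .
  have par: "\<forall>i<length u. (u ! i = x) \<longleftrightarrow> even i"
    using parity[OF adj su] h0 by auto
  show ?thesis unfolding BB_def
  proof
    fix n
    define k where "k = length (filter P (take n w))"
    have fk: "filter P (take n w) = take k u"
      unfolding k_def u_def by (rule filter_take_prefix)
    have kle: "k \<le> length u"
    proof -
      have "length (take k u) = k" using fk k_def by simp
      then show ?thesis by simp
    qed
    have c: "cnt x (take k u) = (k + 1) div 2 \<and> cnt y (take k u) = k div 2"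
      using cnt_take_alt[OF par su xy kle] .
    have cx: "cnt x (take n w) = cnt x (take k u)"
      using cnt_filter[of P x "take n w"] fk unfolding P_def by simp
    have cy: "cnt y (take n w) = cnt y (take k u)"
      using cnt_filter[of P y "take n w"] fk unfolding P_def by simp
    show "cnt y (take n w) \<le> cnt x (take n w) \<and> cnt x (take n w) \<le> Suc (cnt y (take n w))"
      using c cx cy by simp
  qed
qed

lemma BB_empty:
  assumes "filter (\<lambda>z. z = x \<or> z = y) w = []"
  shows "BB w x y"
  unfolding BB_def
proof
  fix n
  define P where "P = (\<lambda>z. z = x \<or> z = y)"
  have "filter P (take n w) = []"
    using filter_take_prefix[of P n w] assms unfolding P_def by simp
  then have "cnt x (take n w) = 0" "cnt y (take n w) = 0"
    using cnt_filter[of P x "take n w"] cnt_filter[of P y "take n w"] unfolding P_def by simp_all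
  then show "cnt y (take n w) \<le> cnt x (take n w) \<and> cnt x (take n w) \<le> Suc (cnt y (take n w))"
    by simp
qed

lemma alt_BB:
  assumes xy: "x \<noteq> y" and alt: "alternate w x y"
  shows "BB w x y \<or> BB w y x"
proof (cases "filter (\<lambda>z. z = x \<or> z = y) w = []")
  case True
  then show ?thesis using BB_empty[OF True] by blast
next
  case False
  have "filter (\<lambda>z. z = x \<or> z = y) w ! 0 \<in> set (filter (\<lambda>z. z = x \<or> z = y) w)"
    using False by (intro nth_mem) simp
  then have m: "filter (\<lambda>z. z = x \<or> z = y) w ! 0 = x \<or> filter (\<lambda>z. z = x \<or> z = y) w ! 0 = y"
    by auto
  have eqf: "filter (\<lambda>z. z = y \<or> z = x) w = filter (\<lambda>z. z = x \<or> z = y) w"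
    by (simp add: disj_commute)
  show ?thesis
  proof (cases "filter (\<lambda>z. z = x \<or> z = y) w ! 0 = x")
    case True
    then show ?thesis using BB_start[OF xy alt False] by blast
  next
    case f2: False
    then have "filter (\<lambda>z. z = y \<or> z = x) w ! 0 = y" using m eqf by simp
    moreover have "filter (\<lambda>z. z = y \<or> z = x) w \<noteq> []" using False eqf by simp
    moreover have "alternate w y x" using alt alternate_sym[of w x y] by simp
    ultimately have "BB w y x" using BB_start[of y x w] xy by blast
    then show ?thesis by blast
  qed
qed

lemma BB_alt:
  assumes xy: "x \<noteq> y" and bb: "BB w x y"
  shows "alternate w x y"
  unfolding alternate_def Let_def
proof (intro allI impI)
  fix i
  define P where "P = (\<lambda>z. z = x \<or> z = y)"
  define u where "u = filter P w"
  assume "Suc i < length (filter (\<lambda>z. z = x \<or> z = y) w)"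
  then have il: "Suc i < length u" unfolding u_def P_def .
  show "filter (\<lambda>z. z = x \<or> z = y) w ! i \<noteq> filter (\<lambda>z. z = x \<or> z = y) w ! Suc i"
  proof
    assume "filter (\<lambda>z. z = x \<or> z = y) w ! i = filter (\<lambda>z. z = x \<or> z = y) w ! Suc i"
    then have eq: "u ! i = u ! Suc i" unfolding u_def P_def .
    obtain n1 where n1: "take (Suc (Suc i)) u = filter P (take n1 w)"
      using take_filter_ex unfolding u_def by blast
    obtain n2 where n2: "take i u = filter P (take n2 w)"
      using take_filter_ex unfolding u_def by blast
    have t: "take (Suc (Suc i)) u = take i u @ [u ! i, u ! Suc i]"
      using il by (simp add: take_Suc_conv_app_nth)
    have "u ! i \<in> set u" using il by (simp add: nth_mem)
    then have zin: "u ! i = x \<or> u ! i = y" unfolding u_def P_def by auto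
    have c1x: "cnt x (take n1 w) = cnt x (take (Suc (Suc i)) u)"
      using cnt_filter[of P x "take n1 w"] n1 unfolding P_def by simp
    have c1y: "cnt y (take n1 w) = cnt y (take (Suc (Suc i)) u)"
      using cnt_filter[of P y "take n1 w"] n1 unfolding P_def by simp
    have c2x: "cnt x (take n2 w) = cnt x (take i u)"
      using cnt_filter[of P x "take n2 w"] n2 unfolding P_def by simp
    have c2y: "cnt y (take n2 w) = cnt y (take i u)"
      using cnt_filter[of P y "take n2 w"] n2 unfolding P_def by simp
    have b1: "cnt y (take n1 w) \<le> cnt x (take n1 w) \<and> cnt x (take n1 w) \<le> Suc (cnt y (take n1 w))"
      using bb unfolding BB_def by blast
    have b2: "cnt y (take n2 w) \<le> cnt x (take n2 w) \<and> cnt x (take n2 w) \<le> Suc (cnt y (take n2 w))"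
      using bb unfolding BB_def by blast
    from zin show False
    proof
      assume z: "u ! i = x"
      have "cnt x (take (Suc (Suc i)) u) = cnt x (take i u) + 2"
           "cnt y (take (Suc (Suc i)) u) = cnt y (take i u)"
        using t z eq xy by simp_all
      then show False using b1 b2 c1x c1y c2x c2y by linarith
    next
      assume z: "u ! i = y"
      have "cnt y (take (Suc (Suc i)) u) = cnt y (take i u) + 2"
           "cnt x (take (Suc (Suc i)) u) = cnt x (take i u)"
        using t z eq xy by simp_all
      then show False using b1 b2 c1x c1y c2x c2y by linarith
    qed
  qed
qed

definition fo :: "'a list \<Rightarrow> 'a \<Rightarrow> nat" where
  "fo w x = length (takeWhile (\<lambda>z. z \<noteq> x) w)"

lemma fo_less: "x \<in> set w \<Longrightarrow> fo w x < length w"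
  unfolding fo_def by (induction w) auto

lemma fo_nth: "x \<in> set w \<Longrightarrow> w ! fo w x = x"
  using nth_length_takeWhile[of "\<lambda>z. z \<noteq> x" w] fo_less[of x w] unfolding fo_def by simp

lemma fo_inj: "x \<in> set w \<Longrightarrow> y \<in> set w \<Longrightarrow> fo w x = fo w y \<Longrightarrow> x = y"
proof -
  assume a: "x \<in> set w" "y \<in> set w" "fo w x = fo w y"
  have "x = w ! fo w x" using fo_nth[OF a(1)] by (rule sym)
  also have "\<dots> = w ! fo w y" using a(3) by (rule arg_cong)
  also have "\<dots> = y" by (rule fo_nth[OF a(2)])
  finally show ?thesis .
qed

lemma not_in_take_fo: "x \<notin> set (take (fo w x) w)"
proof -
  have "take (fo w x) w = takeWhile (\<lambda>z. z \<noteq> x) w"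
    unfolding fo_def by (rule takeWhile_eq_take[symmetric])
  then show ?thesis by (auto dest: set_takeWhileD)
qed

lemma cnt_zero: "x \<notin> set xs \<Longrightarrow> cnt x xs = 0"
  by (induction xs) auto

lemma BB_fo:
  assumes ab: "a \<noteq> b" and a: "a \<in> set w" and b: "b \<in> set w" and bb: "BB w a b"
  shows "fo w a < fo w b"
proof (rule ccontr)
  assume "\<not> fo w a < fo w b"
  moreover have "fo w a \<noteq> fo w b" using fo_inj[OF a b] ab by blast
  ultimately have lt: "fo w b < fo w a" by simp
  define j where "j = fo w b"
  have jl: "j < length w" unfolding j_def using fo_less b .
  have t: "take (Suc j) w = take j w @ [b]"
    using jl fo_nth[OF b] unfolding j_def by (simp add: take_Suc_conv_app_nth)
  have "set (take j w) \<subseteq> set (take (fo w a) w)"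
    using lt unfolding j_def by (simp add: set_take_subset_set_take)
  then have "a \<notin> set (take j w)" using not_in_take_fo[of a w] by blast
  then have "a \<notin> set (take (Suc j) w)" using t ab by simp
  then have "cnt a (take (Suc j) w) = 0" by (rule cnt_zero)
  moreover have "cnt b (take (Suc j) w) \<ge> 1" using t by simp
  moreover have "cnt b (take (Suc j) w) \<le> cnt a (take (Suc j) w)"
    using bb unfolding BB_def by blast
  ultimately show False by simp
qed

lemma BB_short:
  assumes "BB w a b" "BB w b c" "BB w c d" "BB w a d"
  shows "BB w a c \<and> BB w b d"
proof -
  have h: "cnt b (take n w) \<le> cnt a (take n w) \<and> cnt a (take n w) \<le> Suc (cnt b (take n w))"
    "cnt c (take n w) \<le> cnt b (take n w) \<and> cnt b (take n w) \<le> Suc (cnt c (take n w))"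
    "cnt d (take n w) \<le> cnt c (take n w) \<and> cnt c (take n w) \<le> Suc (cnt d (take n w))"
    "cnt d (take n w) \<le> cnt a (take n w) \<and> cnt a (take n w) \<le> Suc (cnt d (take n w))" for n
    using assms unfolding BB_def by blast+
  have "BB w a c" unfolding BB_def
  proof (rule allI)
    fix n
    show "cnt c (take n w) \<le> cnt a (take n w) \<and> cnt a (take n w) \<le> Suc (cnt c (take n w))"
      using h[of n] by linarith
  qed
  moreover have "BB w b d" unfolding BB_def
  proof (rule allI)
    fix n
    show "cnt d (take n w) \<le> cnt b (take n w) \<and> cnt b (take n w) \<le> Suc (cnt d (take n w))"
      using h[of n] by linarith
  qed
  ultimately show ?thesis by blast
qed



lemma tr: "(x::nat) < y \<longrightarrow> y < z \<longrightarrow> x < z" by simp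
lemma tot: "(x::nat) \<noteq> y \<longrightarrow> x < y \<or> y < x" by auto
lemma irr: "\<not> (x::nat) < x" by simp
lemma fin_order:
  fixes f1 f2 f3 f4 f5 f6 f7 f8 f9 f10 :: nat
  assumes "f1 \<noteq> f2"
    and "f1 \<noteq> f3"
    and "f1 \<noteq> f4"
    and "f1 \<noteq> f5"
    and "f1 \<noteq> f6"
    and "f1 \<noteq> f7"
    and "f1 \<noteq> f8"
    and "f1 \<noteq> f9"
    and "f1 \<noteq> f10"
    and "f2 \<noteq> f3"
    and "f2 \<noteq> f4"
    and "f2 \<noteq> f5"
    and "f2 \<noteq> f6"
    and "f2 \<noteq> f7"
    and "f2 \<noteq> f8"
    and "f2 \<noteq> f9"
    and "f2 \<noteq> f10"
    and "f3 \<noteq> f4"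
    and "f3 \<noteq> f5"
    and "f3 \<noteq> f6"
    and "f3 \<noteq> f7"
    and "f3 \<noteq> f8"
    and "f3 \<noteq> f9"
    and "f3 \<noteq> f10"
    and "f4 \<noteq> f5"
    and "f4 \<noteq> f6"
    and "f4 \<noteq> f7"
    and "f4 \<noteq> f8"
    and "f4 \<noteq> f9"
    and "f4 \<noteq> f10"
    and "f5 \<noteq> f6"
    and "f5 \<noteq> f7"
    and "f5 \<noteq> f8"
    and "f5 \<noteq> f9"
    and "f5 \<noteq> f10"
    and "f6 \<noteq> f7"
    and "f6 \<noteq> f8"
    and "f6 \<noteq> f9"
    and "f6 \<noteq> f10"
    and "f7 \<noteq> f8"
    and "f7 \<noteq> f9"
    and "f7 \<noteq> f10"
    and "f8 \<noteq> f9"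
    and "f8 \<noteq> f10"
    and "f9 \<noteq> f10"
    and "\<not> (f1 < f2 \<and> f2 < f4 \<and> f4 < f7)"
    and "\<not> (f1 < f2 \<and> f2 < f5 \<and> f5 < f10)"
    and "\<not> (f1 < f2 \<and> f2 < f8 \<and> f8 < f3)"
    and "\<not> (f1 < f3 \<and> f3 < f4 \<and> f4 < f7)"
    and "\<not> (f1 < f3 \<and> f3 < f8 \<and> f8 < f2)"
    and "\<not> (f1 < f4 \<and> f4 < f3 \<and> f3 < f6)"
    and "\<not> (f1 < f5 \<and> f5 < f3 \<and> f3 < f6)"
    and "\<not> (f1 < f5 \<and> f5 < f4 \<and> f4 < f7)"
    and "\<not> (f1 < f6 \<and> f6 < f3 \<and> f3 < f2)"
    and "\<not> (f1 < f6 \<and> f6 < f3 \<and> f3 < f4)"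
    and "\<not> (f1 < f6 \<and> f6 < f3 \<and> f3 < f5)"
    and "\<not> (f1 < f6 \<and> f6 < f3 \<and> f3 < f9)"
    and "\<not> (f1 < f7 \<and> f7 < f4 \<and> f4 < f3)"
    and "\<not> (f1 < f7 \<and> f7 < f4 \<and> f4 < f5)"
    and "\<not> (f1 < f9 \<and> f9 < f3 \<and> f3 < f6)"
    and "\<not> (f1 < f9 \<and> f9 < f5 \<and> f5 < f4)"
    and "\<not> (f1 < f9 \<and> f9 < f5 \<and> f5 < f10)"
    and "\<not> (f1 < f10 \<and> f10 < f4 \<and> f4 < f7)"
    and "\<not> (f1 < f10 \<and> f10 < f5 \<and> f5 < f2)"
    and "\<not> (f1 < f10 \<and> f10 < f5 \<and> f5 < f9)"
    and "\<not> (f2 < f1 \<and> f1 < f3 \<and> f3 < f8)"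
    and "\<not> (f2 < f1 \<and> f1 < f6 \<and> f6 < f3)"
    and "\<not> (f2 < f1 \<and> f1 < f7 \<and> f7 < f4)"
    and "\<not> (f2 < f1 \<and> f1 < f10 \<and> f10 < f4)"
    and "\<not> (f2 < f1 \<and> f1 < f10 \<and> f10 < f5)"
    and "\<not> (f2 < f4 \<and> f4 < f3 \<and> f3 < f8)"
    and "\<not> (f2 < f4 \<and> f4 < f5 \<and> f5 < f9)"
    and "\<not> (f2 < f4 \<and> f4 < f7 \<and> f7 < f1)"
    and "\<not> (f2 < f4 \<and> f4 < f10 \<and> f10 < f5)"
    and "\<not> (f2 < f5 \<and> f5 < f3 \<and> f3 < f8)"
    and "\<not> (f2 < f5 \<and> f5 < f10 \<and> f10 < f1)"
    and "\<not> (f2 < f5 \<and> f5 < f10 \<and> f10 < f3)"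
    and "\<not> (f2 < f5 \<and> f5 < f10 \<and> f10 < f4)"
    and "\<not> (f2 < f8 \<and> f8 < f3 \<and> f3 < f4)"
    and "\<not> (f2 < f8 \<and> f8 < f3 \<and> f3 < f5)"
    and "\<not> (f2 < f8 \<and> f8 < f3 \<and> f3 < f9)"
    and "\<not> (f2 < f9 \<and> f9 < f3 \<and> f3 < f8)"
    and "\<not> (f3 < f1 \<and> f1 < f2 \<and> f2 < f8)"
    and "\<not> (f3 < f1 \<and> f1 < f7 \<and> f7 < f4)"
    and "\<not> (f3 < f4 \<and> f4 < f1 \<and> f1 < f6)"
    and "\<not> (f3 < f4 \<and> f4 < f1 \<and> f1 < f9)"
    and "\<not> (f3 < f4 \<and> f4 < f2 \<and> f2 < f8)"
    and "\<not> (f3 < f4 \<and> f4 < f5 \<and> f5 < f9)"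
    and "\<not> (f3 < f4 \<and> f4 < f7 \<and> f7 < f1)"
    and "\<not> (f3 < f5 \<and> f5 < f1 \<and> f1 < f6)"
    and "\<not> (f3 < f5 \<and> f5 < f2 \<and> f2 < f8)"
    and "\<not> (f3 < f6 \<and> f6 < f1 \<and> f1 < f2)"
    and "\<not> (f3 < f6 \<and> f6 < f1 \<and> f1 < f4)"
    and "\<not> (f3 < f6 \<and> f6 < f1 \<and> f1 < f5)"
    and "\<not> (f3 < f6 \<and> f6 < f1 \<and> f1 < f9)"
    and "\<not> (f3 < f6 \<and> f6 < f1 \<and> f1 < f10)"
    and "\<not> (f3 < f8 \<and> f8 < f2 \<and> f2 < f1)"
    and "\<not> (f3 < f8 \<and> f8 < f2 \<and> f2 < f5)"
    and "\<not> (f3 < f8 \<and> f8 < f2 \<and> f2 < f9)"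
    and "\<not> (f3 < f9 \<and> f9 < f1 \<and> f1 < f6)"
    and "\<not> (f3 < f9 \<and> f9 < f5 \<and> f5 < f4)"
    and "\<not> (f3 < f9 \<and> f9 < f5 \<and> f5 < f10)"
    and "\<not> (f3 < f10 \<and> f10 < f5 \<and> f5 < f2)"
    and "\<not> (f3 < f10 \<and> f10 < f5 \<and> f5 < f9)"
    and "\<not> (f4 < f1 \<and> f1 < f9 \<and> f9 < f5)"
    and "\<not> (f4 < f2 \<and> f2 < f1 \<and> f1 < f10)"
    and "\<not> (f4 < f2 \<and> f2 < f3 \<and> f3 < f10)"
    and "\<not> (f4 < f2 \<and> f2 < f5 \<and> f5 < f10)"
    and "\<not> (f4 < f2 \<and> f2 < f8 \<and> f8 < f3)"
    and "\<not> (f4 < f2 \<and> f2 < f9 \<and> f9 < f1)"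
    and "\<not> (f4 < f2 \<and> f2 < f9 \<and> f9 < f3)"
    and "\<not> (f4 < f3 \<and> f3 < f1 \<and> f1 < f7)"
    and "\<not> (f4 < f3 \<and> f3 < f6 \<and> f6 < f1)"
    and "\<not> (f4 < f3 \<and> f3 < f8 \<and> f8 < f2)"
    and "\<not> (f4 < f3 \<and> f3 < f9 \<and> f9 < f1)"
    and "\<not> (f4 < f3 \<and> f3 < f9 \<and> f9 < f2)"
    and "\<not> (f4 < f5 \<and> f5 < f1 \<and> f1 < f7)"
    and "\<not> (f4 < f5 \<and> f5 < f9 \<and> f9 < f1)"
    and "\<not> (f4 < f5 \<and> f5 < f9 \<and> f9 < f2)"
    and "\<not> (f4 < f5 \<and> f5 < f9 \<and> f9 < f3)"
    and "\<not> (f4 < f7 \<and> f7 < f1 \<and> f1 < f2)"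
    and "\<not> (f4 < f7 \<and> f7 < f1 \<and> f1 < f5)"
    and "\<not> (f4 < f7 \<and> f7 < f1 \<and> f1 < f10)"
    and "\<not> (f4 < f10 \<and> f10 < f1 \<and> f1 < f7)"
    and "\<not> (f4 < f10 \<and> f10 < f5 \<and> f5 < f2)"
    and "\<not> (f5 < f1 \<and> f1 < f6 \<and> f6 < f3)"
    and "\<not> (f5 < f1 \<and> f1 < f7 \<and> f7 < f4)"
    and "\<not> (f5 < f2 \<and> f2 < f1 \<and> f1 < f10)"
    and "\<not> (f5 < f2 \<and> f2 < f4 \<and> f4 < f10)"
    and "\<not> (f5 < f2 \<and> f2 < f8 \<and> f8 < f3)"
    and "\<not> (f5 < f3 \<and> f3 < f6 \<and> f6 < f1)"
    and "\<not> (f5 < f3 \<and> f3 < f8 \<and> f8 < f2)"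
    and "\<not> (f5 < f4 \<and> f4 < f2 \<and> f2 < f9)"
    and "\<not> (f5 < f4 \<and> f4 < f3 \<and> f3 < f9)"
    and "\<not> (f5 < f4 \<and> f4 < f7 \<and> f7 < f1)"
    and "\<not> (f5 < f9 \<and> f9 < f1 \<and> f1 < f4)"
    and "\<not> (f5 < f9 \<and> f9 < f1 \<and> f1 < f10)"
    and "\<not> (f5 < f9 \<and> f9 < f3 \<and> f3 < f4)"
    and "\<not> (f5 < f9 \<and> f9 < f3 \<and> f3 < f10)"
    and "\<not> (f5 < f10 \<and> f10 < f1 \<and> f1 < f2)"
    and "\<not> (f5 < f10 \<and> f10 < f1 \<and> f1 < f9)"
    and "\<not> (f5 < f10 \<and> f10 < f3 \<and> f3 < f9)"
    and "\<not> (f5 < f10 \<and> f10 < f4 \<and> f4 < f2)"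
    and "\<not> (f6 < f1 \<and> f1 < f4 \<and> f4 < f3)"
    and "\<not> (f6 < f1 \<and> f1 < f5 \<and> f5 < f3)"
    and "\<not> (f6 < f1 \<and> f1 < f9 \<and> f9 < f3)"
    and "\<not> (f6 < f3 \<and> f3 < f4 \<and> f4 < f1)"
    and "\<not> (f6 < f3 \<and> f3 < f5 \<and> f5 < f1)"
    and "\<not> (f6 < f3 \<and> f3 < f9 \<and> f9 < f1)"
    and "\<not> (f7 < f1 \<and> f1 < f2 \<and> f2 < f4)"
    and "\<not> (f7 < f1 \<and> f1 < f3 \<and> f3 < f4)"
    and "\<not> (f7 < f1 \<and> f1 < f5 \<and> f5 < f4)"
    and "\<not> (f7 < f1 \<and> f1 < f10 \<and> f10 < f4)"
    and "\<not> (f7 < f4 \<and> f4 < f2 \<and> f2 < f1)"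
    and "\<not> (f7 < f4 \<and> f4 < f5 \<and> f5 < f1)"
    and "\<not> (f7 < f4 \<and> f4 < f10 \<and> f10 < f1)"
    and "\<not> (f8 < f2 \<and> f2 < f1 \<and> f1 < f3)"
    and "\<not> (f8 < f2 \<and> f2 < f4 \<and> f4 < f3)"
    and "\<not> (f8 < f2 \<and> f2 < f5 \<and> f5 < f3)"
    and "\<not> (f8 < f2 \<and> f2 < f9 \<and> f9 < f3)"
    and "\<not> (f8 < f3 \<and> f3 < f4 \<and> f4 < f2)"
    and "\<not> (f8 < f3 \<and> f3 < f5 \<and> f5 < f2)"
    and "\<not> (f9 < f1 \<and> f1 < f6 \<and> f6 < f3)"
    and "\<not> (f9 < f1 \<and> f1 < f10 \<and> f10 < f5)"
    and "\<not> (f9 < f2 \<and> f2 < f4 \<and> f4 < f5)"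
    and "\<not> (f9 < f3 \<and> f3 < f4 \<and> f4 < f5)"
    and "\<not> (f9 < f3 \<and> f3 < f8 \<and> f8 < f2)"
    and "\<not> (f9 < f3 \<and> f3 < f10 \<and> f10 < f5)"
    and "\<not> (f9 < f5 \<and> f5 < f4 \<and> f4 < f1)"
    and "\<not> (f9 < f5 \<and> f5 < f4 \<and> f4 < f2)"
    and "\<not> (f9 < f5 \<and> f5 < f4 \<and> f4 < f3)"
    and "\<not> (f9 < f5 \<and> f5 < f10 \<and> f10 < f1)"
    and "\<not> (f10 < f1 \<and> f1 < f2 \<and> f2 < f5)"
    and "\<not> (f10 < f1 \<and> f1 < f6 \<and> f6 < f3)"
    and "\<not> (f10 < f1 \<and> f1 < f7 \<and> f7 < f4)"
    and "\<not> (f10 < f1 \<and> f1 < f9 \<and> f9 < f5)"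
    and "\<not> (f10 < f3 \<and> f3 < f6 \<and> f6 < f1)"
    and "\<not> (f10 < f3 \<and> f3 < f9 \<and> f9 < f5)"
    and "\<not> (f10 < f4 \<and> f4 < f2 \<and> f2 < f5)"
    and "\<not> (f10 < f4 \<and> f4 < f7 \<and> f7 < f1)"
    and "\<not> (f10 < f5 \<and> f5 < f2 \<and> f2 < f1)"
    and "\<not> (f10 < f5 \<and> f5 < f2 \<and> f2 < f4)"
    and "\<not> (f10 < f5 \<and> f5 < f9 \<and> f9 < f1)"
    and "\<not> (f10 < f5 \<and> f5 < f9 \<and> f9 < f3)"
  shows False
  using assms tr[of f1 f2 f3] tr[of f1 f2 f4] tr[of f1 f2 f5] tr[of f1 f2 f6] tr[of f1 f2 f7] tr[of f1 f2 f8] tr[of f1 f2 f9] tr[of f1 f2 f10] tr[of f1 f3 f2] tr[of f1 f3 f4] tr[of f1 f3 f5] tr[of f1 f3 f6] tr[of f1 f3 f7] tr[of f1 f3 f8] tr[of f1 f3 f9] tr[of f1 f3 f10] tr[of f1 f4 f2] tr[of f1 f4 f3] tr[of f1 f4 f5] tr[of f1 f4 f6] tr[of f1 f4 f7] tr[of f1 f4 f8] tr[of f1 f4 f9] tr[of f1 f4 f10] tr[of f1 f5 f2] tr[of f1 f5 f3] tr[of f1 f5 f4] tr[of f1 f5 f6] tr[of f1 f5 f7] tr[of f1 f5 f8] tr[of f1 f5 f9] tr[of f1 f5 f10] tr[of f1 f6 f2] tr[of f1 f6 f3] tr[of f1 f6 f4] tr[of f1 f6 f5] tr[of f1 f6 f7]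 tr[of f1 f6 f8] tr[of f1 f6 f9] tr[of f1 f6 f10] tr[of f1 f7 f2] tr[of f1 f7 f3] tr[of f1 f7 f4] tr[of f1 f7 f5] tr[of f1 f7 f6] tr[of f1 f7 f8] tr[of f1 f7 f9] tr[of f1 f7 f10] tr[of f1 f8 f2] tr[of f1 f8 f3] tr[of f1 f8 f4] tr[of f1 f8 f5] tr[of f1 f8 f6] tr[of f1 f8 f7] tr[of f1 f8 f9] tr[of f1 f8 f10] tr[of f1 f9 f2] tr[of f1 f9 f3] tr[of f1 f9 f4] tr[of f1 f9 f5] tr[of f1 f9 f6] tr[of f1 f9 f7] tr[of f1 f9 f8] tr[of f1 f9 f10] tr[of f1 f10 f2] tr[of f1 f10 f3] tr[of f1 f10 f4] tr[of f1 f10 f5] tr[of f1 f10 f6] tr[of f1 f10 f7] tr[of f1 f10 f8] tr[of f1 f10 f9] tr[of f2 f1 f3] tr[of f2 f1 f4] tr[of f2 f1 f5] tr[of f2 f1 f6] tr[of f2 f1 f7] tr[of f2 f1 f8] tr[of f2 f1 f9] tr[of f2 f1 f10] tr[of f2 f3 f1] tr[of f2 f3 f4] tr[of f2 f3 f5] tr[of f2 f3 f6] tr[of f2 f3 f7] tr[of f2 f3 f8] tr[of f2 f3 f9] tr[of f2 f3 f10] tr[of f2 f4 f1] tr[of f2 f4 f3] tr[of f2 f4 f5] tr[of f2 f4 f6] tr[of f2 f4 f7] tr[of f2 f4 f8] tr[of f2 f4 f9] tr[of f2 f4 f10] tr[of f2 f5 f1] tr[of f2 f5 f3] tr[of f2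 f5 f4] tr[of f2 f5 f6] tr[of f2 f5 f7] tr[of f2 f5 f8] tr[of f2 f5 f9] tr[of f2 f5 f10] tr[of f2 f6 f1] tr[of f2 f6 f3] tr[of f2 f6 f4] tr[of f2 f6 f5] tr[of f2 f6 f7] tr[of f2 f6 f8] tr[of f2 f6 f9] tr[of f2 f6 f10] tr[of f2 f7 f1] tr[of f2 f7 f3] tr[of f2 f7 f4] tr[of f2 f7 f5] tr[of f2 f7 f6] tr[of f2 f7 f8] tr[of f2 f7 f9] tr[of f2 f7 f10] tr[of f2 f8 f1] tr[of f2 f8 f3] tr[of f2 f8 f4] tr[of f2 f8 f5] tr[of f2 f8 f6] tr[of f2 f8 f7] tr[of f2 f8 f9] tr[of f2 f8 f10] tr[of f2 f9 f1] tr[of f2 f9 f3] tr[of f2 f9 f4] tr[of f2 f9 f5] tr[of f2 f9 f6] tr[of f2 f9 f7] tr[of f2 f9 f8] tr[of f2 f9 f10] tr[of f2 f10 f1] tr[of f2 f10 f3] tr[of f2 f10 f4] tr[of f2 f10 f5] tr[of f2 f10 f6] tr[of f2 f10 f7] tr[of f2 f10 f8] tr[of f2 f10 f9] tr[of f3 f1 f2] tr[of f3 f1 f4] tr[of f3 f1 f5] tr[of f3 f1 f6] tr[of f3 f1 f7] tr[of f3 f1 f8] tr[of f3 f1 f9] tr[of f3 f1 f10] tr[of f3 f2 f1] tr[of f3 f2 f4] tr[of f3 f2 f5] tr[of f3 f2 f6] tr[of f3 f2 f7] tr[of f3 f2 f8] tr[of f3 f2 f9] tr[of f3 f2 f10]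 tr[of f3 f4 f1] tr[of f3 f4 f2] tr[of f3 f4 f5] tr[of f3 f4 f6] tr[of f3 f4 f7] tr[of f3 f4 f8] tr[of f3 f4 f9] tr[of f3 f4 f10] tr[of f3 f5 f1] tr[of f3 f5 f2] tr[of f3 f5 f4] tr[of f3 f5 f6] tr[of f3 f5 f7] tr[of f3 f5 f8] tr[of f3 f5 f9] tr[of f3 f5 f10] tr[of f3 f6 f1] tr[of f3 f6 f2] tr[of f3 f6 f4] tr[of f3 f6 f5] tr[of f3 f6 f7] tr[of f3 f6 f8] tr[of f3 f6 f9] tr[of f3 f6 f10] tr[of f3 f7 f1] tr[of f3 f7 f2] tr[of f3 f7 f4] tr[of f3 f7 f5] tr[of f3 f7 f6] tr[of f3 f7 f8] tr[of f3 f7 f9] tr[of f3 f7 f10] tr[of f3 f8 f1] tr[of f3 f8 f2] tr[of f3 f8 f4] tr[of f3 f8 f5] tr[of f3 f8 f6] tr[of f3 f8 f7] tr[of f3 f8 f9] tr[of f3 f8 f10] tr[of f3 f9 f1] tr[of f3 f9 f2] tr[of f3 f9 f4] tr[of f3 f9 f5] tr[of f3 f9 f6] tr[of f3 f9 f7] tr[of f3 f9 f8] tr[of f3 f9 f10] tr[of f3 f10 f1] tr[of f3 f10 f2] tr[of f3 f10 f4] tr[of f3 f10 f5] tr[of f3 f10 f6] tr[of f3 f10 f7] tr[of f3 f10 f8] tr[of f3 f10 f9] tr[of f4 f1 f2] tr[of f4 f1 f3] tr[of f4 f1 f5] tr[of f4 f1 f6] tr[of f4 f1 f7] tr[of f4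 f1 f8] tr[of f4 f1 f9] tr[of f4 f1 f10] tr[of f4 f2 f1] tr[of f4 f2 f3] tr[of f4 f2 f5] tr[of f4 f2 f6] tr[of f4 f2 f7] tr[of f4 f2 f8] tr[of f4 f2 f9] tr[of f4 f2 f10] tr[of f4 f3 f1] tr[of f4 f3 f2] tr[of f4 f3 f5] tr[of f4 f3 f6] tr[of f4 f3 f7] tr[of f4 f3 f8] tr[of f4 f3 f9] tr[of f4 f3 f10] tr[of f4 f5 f1] tr[of f4 f5 f2] tr[of f4 f5 f3] tr[of f4 f5 f6] tr[of f4 f5 f7] tr[of f4 f5 f8] tr[of f4 f5 f9] tr[of f4 f5 f10] tr[of f4 f6 f1] tr[of f4 f6 f2] tr[of f4 f6 f3] tr[of f4 f6 f5] tr[of f4 f6 f7] tr[of f4 f6 f8] tr[of f4 f6 f9] tr[of f4 f6 f10] tr[of f4 f7 f1] tr[of f4 f7 f2] tr[of f4 f7 f3] tr[of f4 f7 f5] tr[of f4 f7 f6] tr[of f4 f7 f8] tr[of f4 f7 f9] tr[of f4 f7 f10] tr[of f4 f8 f1] tr[of f4 f8 f2] tr[of f4 f8 f3] tr[of f4 f8 f5] tr[of f4 f8 f6] tr[of f4 f8 f7] tr[of f4 f8 f9] tr[of f4 f8 f10] tr[of f4 f9 f1] tr[of f4 f9 f2] tr[of f4 f9 f3] tr[of f4 f9 f5] tr[of f4 f9 f6] tr[of f4 f9 f7] tr[of f4 f9 f8] tr[of f4 f9 f10] tr[of f4 f10 f1] tr[of f4 f10 f2] tr[of f4 f10 f3]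 tr[of f4 f10 f5] tr[of f4 f10 f6] tr[of f4 f10 f7] tr[of f4 f10 f8] tr[of f4 f10 f9] tr[of f5 f1 f2] tr[of f5 f1 f3] tr[of f5 f1 f4] tr[of f5 f1 f6] tr[of f5 f1 f7] tr[of f5 f1 f8] tr[of f5 f1 f9] tr[of f5 f1 f10] tr[of f5 f2 f1] tr[of f5 f2 f3] tr[of f5 f2 f4] tr[of f5 f2 f6] tr[of f5 f2 f7] tr[of f5 f2 f8] tr[of f5 f2 f9] tr[of f5 f2 f10] tr[of f5 f3 f1] tr[of f5 f3 f2] tr[of f5 f3 f4] tr[of f5 f3 f6] tr[of f5 f3 f7] tr[of f5 f3 f8] tr[of f5 f3 f9] tr[of f5 f3 f10] tr[of f5 f4 f1] tr[of f5 f4 f2] tr[of f5 f4 f3] tr[of f5 f4 f6] tr[of f5 f4 f7] tr[of f5 f4 f8] tr[of f5 f4 f9] tr[of f5 f4 f10] tr[of f5 f6 f1] tr[of f5 f6 f2] tr[of f5 f6 f3] tr[of f5 f6 f4] tr[of f5 f6 f7] tr[of f5 f6 f8] tr[of f5 f6 f9] tr[of f5 f6 f10] tr[of f5 f7 f1] tr[of f5 f7 f2] tr[of f5 f7 f3] tr[of f5 f7 f4] tr[of f5 f7 f6] tr[of f5 f7 f8] tr[of f5 f7 f9] tr[of f5 f7 f10] tr[of f5 f8 f1] tr[of f5 f8 f2] tr[of f5 f8 f3] tr[of f5 f8 f4] tr[of f5 f8 f6] tr[of f5 f8 f7] tr[of f5 f8 f9] tr[of f5 f8 f10] tr[of f5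 f9 f1] tr[of f5 f9 f2] tr[of f5 f9 f3] tr[of f5 f9 f4] tr[of f5 f9 f6] tr[of f5 f9 f7] tr[of f5 f9 f8] tr[of f5 f9 f10] tr[of f5 f10 f1] tr[of f5 f10 f2] tr[of f5 f10 f3] tr[of f5 f10 f4] tr[of f5 f10 f6] tr[of f5 f10 f7] tr[of f5 f10 f8] tr[of f5 f10 f9] tr[of f6 f1 f2] tr[of f6 f1 f3] tr[of f6 f1 f4] tr[of f6 f1 f5] tr[of f6 f1 f7] tr[of f6 f1 f8] tr[of f6 f1 f9] tr[of f6 f1 f10] tr[of f6 f2 f1] tr[of f6 f2 f3] tr[of f6 f2 f4] tr[of f6 f2 f5] tr[of f6 f2 f7] tr[of f6 f2 f8] tr[of f6 f2 f9] tr[of f6 f2 f10] tr[of f6 f3 f1] tr[of f6 f3 f2] tr[of f6 f3 f4] tr[of f6 f3 f5] tr[of f6 f3 f7] tr[of f6 f3 f8] tr[of f6 f3 f9] tr[of f6 f3 f10] tr[of f6 f4 f1] tr[of f6 f4 f2] tr[of f6 f4 f3] tr[of f6 f4 f5] tr[of f6 f4 f7] tr[of f6 f4 f8] tr[of f6 f4 f9] tr[of f6 f4 f10] tr[of f6 f5 f1] tr[of f6 f5 f2] tr[of f6 f5 f3] tr[of f6 f5 f4] tr[of f6 f5 f7] tr[of f6 f5 f8] tr[of f6 f5 f9] tr[of f6 f5 f10] tr[of f6 f7 f1] tr[of f6 f7 f2] tr[of f6 f7 f3] tr[of f6 f7 f4] tr[of f6 f7 f5] tr[of f6 f7 f8]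 tr[of f6 f7 f9] tr[of f6 f7 f10] tr[of f6 f8 f1] tr[of f6 f8 f2] tr[of f6 f8 f3] tr[of f6 f8 f4] tr[of f6 f8 f5] tr[of f6 f8 f7] tr[of f6 f8 f9] tr[of f6 f8 f10] tr[of f6 f9 f1] tr[of f6 f9 f2] tr[of f6 f9 f3] tr[of f6 f9 f4] tr[of f6 f9 f5] tr[of f6 f9 f7] tr[of f6 f9 f8] tr[of f6 f9 f10] tr[of f6 f10 f1] tr[of f6 f10 f2] tr[of f6 f10 f3] tr[of f6 f10 f4] tr[of f6 f10 f5] tr[of f6 f10 f7] tr[of f6 f10 f8] tr[of f6 f10 f9] tr[of f7 f1 f2] tr[of f7 f1 f3] tr[of f7 f1 f4] tr[of f7 f1 f5] tr[of f7 f1 f6] tr[of f7 f1 f8] tr[of f7 f1 f9] tr[of f7 f1 f10] tr[of f7 f2 f1] tr[of f7 f2 f3] tr[of f7 f2 f4] tr[of f7 f2 f5] tr[of f7 f2 f6] tr[of f7 f2 f8] tr[of f7 f2 f9] tr[of f7 f2 f10] tr[of f7 f3 f1] tr[of f7 f3 f2] tr[of f7 f3 f4] tr[of f7 f3 f5] tr[of f7 f3 f6] tr[of f7 f3 f8] tr[of f7 f3 f9] tr[of f7 f3 f10] tr[of f7 f4 f1] tr[of f7 f4 f2] tr[of f7 f4 f3] tr[of f7 f4 f5] tr[of f7 f4 f6] tr[of f7 f4 f8] tr[of f7 f4 f9] tr[of f7 f4 f10] tr[of f7 f5 f1] tr[of f7 f5 f2] tr[of f7 f5 f3] tr[of f7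 f5 f4] tr[of f7 f5 f6] tr[of f7 f5 f8] tr[of f7 f5 f9] tr[of f7 f5 f10] tr[of f7 f6 f1] tr[of f7 f6 f2] tr[of f7 f6 f3] tr[of f7 f6 f4] tr[of f7 f6 f5] tr[of f7 f6 f8] tr[of f7 f6 f9] tr[of f7 f6 f10] tr[of f7 f8 f1] tr[of f7 f8 f2] tr[of f7 f8 f3] tr[of f7 f8 f4] tr[of f7 f8 f5] tr[of f7 f8 f6] tr[of f7 f8 f9] tr[of f7 f8 f10] tr[of f7 f9 f1] tr[of f7 f9 f2] tr[of f7 f9 f3] tr[of f7 f9 f4] tr[of f7 f9 f5] tr[of f7 f9 f6] tr[of f7 f9 f8] tr[of f7 f9 f10] tr[of f7 f10 f1] tr[of f7 f10 f2] tr[of f7 f10 f3] tr[of f7 f10 f4] tr[of f7 f10 f5] tr[of f7 f10 f6] tr[of f7 f10 f8] tr[of f7 f10 f9] tr[of f8 f1 f2] tr[of f8 f1 f3] tr[of f8 f1 f4] tr[of f8 f1 f5] tr[of f8 f1 f6] tr[of f8 f1 f7] tr[of f8 f1 f9] tr[of f8 f1 f10] tr[of f8 f2 f1] tr[of f8 f2 f3] tr[of f8 f2 f4] tr[of f8 f2 f5] tr[of f8 f2 f6] tr[of f8 f2 f7] tr[of f8 f2 f9] tr[of f8 f2 f10] tr[of f8 f3 f1] tr[of f8 f3 f2] tr[of f8 f3 f4] tr[of f8 f3 f5] tr[of f8 f3 f6] tr[of f8 f3 f7] tr[of f8 f3 f9] tr[of f8 f3 f10] tr[of f8 f4 f1]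 tr[of f8 f4 f2] tr[of f8 f4 f3] tr[of f8 f4 f5] tr[of f8 f4 f6] tr[of f8 f4 f7] tr[of f8 f4 f9] tr[of f8 f4 f10] tr[of f8 f5 f1] tr[of f8 f5 f2] tr[of f8 f5 f3] tr[of f8 f5 f4] tr[of f8 f5 f6] tr[of f8 f5 f7] tr[of f8 f5 f9] tr[of f8 f5 f10] tr[of f8 f6 f1] tr[of f8 f6 f2] tr[of f8 f6 f3] tr[of f8 f6 f4] tr[of f8 f6 f5] tr[of f8 f6 f7] tr[of f8 f6 f9] tr[of f8 f6 f10] tr[of f8 f7 f1] tr[of f8 f7 f2] tr[of f8 f7 f3] tr[of f8 f7 f4] tr[of f8 f7 f5] tr[of f8 f7 f6] tr[of f8 f7 f9] tr[of f8 f7 f10] tr[of f8 f9 f1] tr[of f8 f9 f2] tr[of f8 f9 f3] tr[of f8 f9 f4] tr[of f8 f9 f5] tr[of f8 f9 f6] tr[of f8 f9 f7] tr[of f8 f9 f10] tr[of f8 f10 f1] tr[of f8 f10 f2] tr[of f8 f10 f3] tr[of f8 f10 f4] tr[of f8 f10 f5] tr[of f8 f10 f6] tr[of f8 f10 f7] tr[of f8 f10 f9] tr[of f9 f1 f2] tr[of f9 f1 f3] tr[of f9 f1 f4] tr[of f9 f1 f5] tr[of f9 f1 f6] tr[of f9 f1 f7] tr[of f9 f1 f8] tr[of f9 f1 f10] tr[of f9 f2 f1] tr[of f9 f2 f3] tr[of f9 f2 f4] tr[of f9 f2 f5] tr[of f9 f2 f6] tr[of f9 f2 f7] tr[of f9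 f2 f8] tr[of f9 f2 f10] tr[of f9 f3 f1] tr[of f9 f3 f2] tr[of f9 f3 f4] tr[of f9 f3 f5] tr[of f9 f3 f6] tr[of f9 f3 f7] tr[of f9 f3 f8] tr[of f9 f3 f10] tr[of f9 f4 f1] tr[of f9 f4 f2] tr[of f9 f4 f3] tr[of f9 f4 f5] tr[of f9 f4 f6] tr[of f9 f4 f7] tr[of f9 f4 f8] tr[of f9 f4 f10] tr[of f9 f5 f1] tr[of f9 f5 f2] tr[of f9 f5 f3] tr[of f9 f5 f4] tr[of f9 f5 f6] tr[of f9 f5 f7] tr[of f9 f5 f8] tr[of f9 f5 f10] tr[of f9 f6 f1] tr[of f9 f6 f2] tr[of f9 f6 f3] tr[of f9 f6 f4] tr[of f9 f6 f5] tr[of f9 f6 f7] tr[of f9 f6 f8] tr[of f9 f6 f10] tr[of f9 f7 f1] tr[of f9 f7 f2] tr[of f9 f7 f3] tr[of f9 f7 f4] tr[of f9 f7 f5] tr[of f9 f7 f6] tr[of f9 f7 f8] tr[of f9 f7 f10] tr[of f9 f8 f1] tr[of f9 f8 f2] tr[of f9 f8 f3] tr[of f9 f8 f4] tr[of f9 f8 f5] tr[of f9 f8 f6] tr[of f9 f8 f7] tr[of f9 f8 f10] tr[of f9 f10 f1] tr[of f9 f10 f2] tr[of f9 f10 f3] tr[of f9 f10 f4] tr[of f9 f10 f5] tr[of f9 f10 f6] tr[of f9 f10 f7] tr[of f9 f10 f8] tr[of f10 f1 f2] tr[of f10 f1 f3] tr[of f10 f1 f4] tr[of f10 f1 f5]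 tr[of f10 f1 f6] tr[of f10 f1 f7] tr[of f10 f1 f8] tr[of f10 f1 f9] tr[of f10 f2 f1] tr[of f10 f2 f3] tr[of f10 f2 f4] tr[of f10 f2 f5] tr[of f10 f2 f6] tr[of f10 f2 f7] tr[of f10 f2 f8] tr[of f10 f2 f9] tr[of f10 f3 f1] tr[of f10 f3 f2] tr[of f10 f3 f4] tr[of f10 f3 f5] tr[of f10 f3 f6] tr[of f10 f3 f7] tr[of f10 f3 f8] tr[of f10 f3 f9] tr[of f10 f4 f1] tr[of f10 f4 f2] tr[of f10 f4 f3] tr[of f10 f4 f5] tr[of f10 f4 f6] tr[of f10 f4 f7] tr[of f10 f4 f8] tr[of f10 f4 f9] tr[of f10 f5 f1] tr[of f10 f5 f2] tr[of f10 f5 f3] tr[of f10 f5 f4] tr[of f10 f5 f6] tr[of f10 f5 f7] tr[of f10 f5 f8] tr[of f10 f5 f9] tr[of f10 f6 f1] tr[of f10 f6 f2] tr[of f10 f6 f3] tr[of f10 f6 f4] tr[of f10 f6 f5] tr[of f10 f6 f7] tr[of f10 f6 f8] tr[of f10 f6 f9] tr[of f10 f7 f1] tr[of f10 f7 f2] tr[of f10 f7 f3] tr[of f10 f7 f4] tr[of f10 f7 f5] tr[of f10 f7 f6] tr[of f10 f7 f8] tr[of f10 f7 f9] tr[of f10 f8 f1] tr[of f10 f8 f2] tr[of f10 f8 f3] tr[of f10 f8 f4] tr[of f10 f8 f5] tr[of f10 f8 f6] tr[of f10 f8 f7] tr[of f10 f8 f9] tr[of f10 f9 f1] tr[of f10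 f9 f2] tr[of f10 f9 f3] tr[of f10 f9 f4] tr[of f10 f9 f5] tr[of f10 f9 f6] tr[of f10 f9 f7] tr[of f10 f9 f8] tot[of f1 f2] tot[of f1 f3] tot[of f1 f4] tot[of f1 f5] tot[of f1 f6] tot[of f1 f7] tot[of f1 f8] tot[of f1 f9] tot[of f1 f10] tot[of f2 f3] tot[of f2 f4] tot[of f2 f5] tot[of f2 f6] tot[of f2 f7] tot[of f2 f8] tot[of f2 f9] tot[of f2 f10] tot[of f3 f4] tot[of f3 f5] tot[of f3 f6] tot[of f3 f7] tot[of f3 f8] tot[of f3 f9] tot[of f3 f10] tot[of f4 f5] tot[of f4 f6] tot[of f4 f7] tot[of f4 f8] tot[of f4 f9] tot[of f4 f10] tot[of f5 f6] tot[of f5 f7] tot[of f5 f8] tot[of f5 f9] tot[of f5 f10] tot[of f6 f7] tot[of f6 f8] tot[of f6 f9] tot[of f6 f10] tot[of f7 f8] tot[of f7 f9] tot[of f7 f10] tot[of f8 f9] tot[of f8 f10] tot[of f9 f10] irr[of f1] irr[of f2] irr[of f3] irr[of f4] irr[of f5] irr[of f6] irr[of f7] irr[of f8] irr[of f9] irr[of f10] by sat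

lemma E_tab2[simp]:
  "T9_E (Suc 0) 2"
  "T9_E (Suc 0) 3"
  "T9_E (Suc 0) 4"
  "T9_E (Suc 0) 5"
  "T9_E (Suc 0) 6"
  "T9_E (Suc 0) 7"
  "\<not> T9_E (Suc 0) 8"
  "T9_E (Suc 0) 9"
  "T9_E (Suc 0) 10"
  "T9_E 2 (Suc 0)"
  "T9_E 3 (Suc 0)"
  "T9_E 4 (Suc 0)"
  "T9_E 5 (Suc 0)"
  "T9_E 6 (Suc 0)"
  "T9_E 7 (Suc 0)"
  "\<not> T9_E 8 (Suc 0)"
  "T9_E 9 (Suc 0)"
  "T9_E 10 (Suc 0)"
  by (simp_all add: T9_E_def T9_edges_def)

lemma E_tab[simp]:
  "T9_E 1 2"
  "T9_E 1 3"
  "T9_E 1 4"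
  "T9_E 1 5"
  "T9_E 1 6"
  "T9_E 1 7"
  "\<not> T9_E 1 8"
  "T9_E 1 9"
  "T9_E 1 10"
  "T9_E 2 1"
  "T9_E 2 3"
  "T9_E 2 4"
  "T9_E 2 5"
  "\<not> T9_E 2 6"
  "\<not> T9_E 2 7"
  "T9_E 2 8"
  "T9_E 2 9"
  "\<not> T9_E 2 10"
  "T9_E 3 1"
  "T9_E 3 2"
  "T9_E 3 4"
  "T9_E 3 5"
  "T9_E 3 6"
  "\<not> T9_E 3 7"
  "T9_E 3 8"
  "T9_E 3 9"
  "T9_E 3 10"
  "T9_E 4 1"
  "T9_E 4 2"
  "T9_E 4 3"
  "T9_E 4 5"
  "\<not> T9_E 4 6"
  "T9_E 4 7"
  "\<not> T9_E 4 8"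
  "\<not> T9_E 4 9"
  "T9_E 4 10"
  "T9_E 5 1"
  "T9_E 5 2"
  "T9_E 5 3"
  "T9_E 5 4"
  "\<not> T9_E 5 6"
  "\<not> T9_E 5 7"
  "\<not> T9_E 5 8"
  "T9_E 5 9"
  "T9_E 5 10"
  "T9_E 6 1"
  "\<not> T9_E 6 2"
  "T9_E 6 3"
  "\<not> T9_E 6 4"
  "\<not> T9_E 6 5"
  "\<not> T9_E 6 7"
  "\<not> T9_E 6 8"
  "\<not> T9_E 6 9"
  "\<not> T9_E 6 10"
  "T9_E 7 1"
  "\<not> T9_E 7 2"
  "\<not> T9_E 7 3"
  "T9_E 7 4"
  "\<not> T9_E 7 5"
  "\<not> T9_E 7 6"
  "\<not> T9_E 7 8"
  "\<not> T9_E 7 9"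
  "\<not> T9_E 7 10"
  "\<not> T9_E 8 1"
  "T9_E 8 2"
  "T9_E 8 3"
  "\<not> T9_E 8 4"
  "\<not> T9_E 8 5"
  "\<not> T9_E 8 6"
  "\<not> T9_E 8 7"
  "\<not> T9_E 8 9"
  "\<not> T9_E 8 10"
  "T9_E 9 1"
  "T9_E 9 2"
  "T9_E 9 3"
  "\<not> T9_E 9 4"
  "T9_E 9 5"
  "\<not> T9_E 9 6"
  "\<not> T9_E 9 7"
  "\<not> T9_E 9 8"
  "\<not> T9_E 9 10"
  "T9_E 10 1"
  "\<not> T9_E 10 2"
  "T9_E 10 3"
  "T9_E 10 4"
  "T9_E 10 5"
  "\<not> T9_E 10 6"
  "\<not> T9_E 10 7"
  "\<not> T9_E 10 8"
  "\<not> T9_E 10 9"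
  by (simp_all add: T9_E_def T9_edges_def)

lemma V10: "T9_V = {1,2,3,4,5,6,7,8,9,10}"
  unfolding T9_V_def by (auto; presburger)

lemma T9_part1: "\<not> word_representable T9_V T9_E"
proof
  assume "word_representable T9_V T9_E"
  then obtain w where sw: "set w = T9_V"
    and rep: "\<forall>x\<in>T9_V. \<forall>y\<in>T9_V. x \<noteq> y \<longrightarrow> (alternate w x y \<longleftrightarrow> T9_E x y)"
    unfolding word_representable_def by blast
  define f where "f = fo w"
  have dir: "BB w a b" if a: "a \<in> T9_V" and b: "b \<in> T9_V" and e: "T9_E a b" and lt: "f a < f b" for a b
  proof -
    have ab: "a \<noteq> b" using lt by auto
    have "alternate w a b" using rep a b ab e by simp
    then have "BB w a b \<or> BB w b a" using alt_BB[OF ab] by simp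
    moreover have "\<not> BB w b a"
    proof
      assume "BB w b a"
      then have "fo w b < fo w a" using BB_fo[of b a w] ab a b sw by auto
      then show False using lt unfolding f_def by simp
    qed
    ultimately show "BB w a b" by blast
  qed
  have key: "\<not> (f a < f b \<and> f b < f c \<and> f c < f d)"
    if V: "a \<in> T9_V" "b \<in> T9_V" "c \<in> T9_V" "d \<in> T9_V"
      and E: "T9_E a b" "T9_E b c" "T9_E c d" "T9_E a d"
      and ne: "\<not> (T9_E a c \<and> T9_E b d)" for a b c d
  proof
    assume o: "f a < f b \<and> f b < f c \<and> f c < f d"
    have o1: "f a < f b" "f b < f c" "f c < f d" "f a < f d" using o by auto
    have bb0: "BB w a c \<and> BB w b d"
      by (rule BB_short[OF dir[OF V(1) V(2) E(1) o1(1)] dir[OF V(2) V(3) E(2) o1(2)]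
        dir[OF V(3) V(4) E(3) o1(3)] dir[OF V(1) V(4) E(4) o1(4)]])
    have bb: "BB w a c" "BB w b d" using bb0 by simp_all
    have ne2: "a \<noteq> c" "b \<noteq> d" using o by auto
    have "alternate w a c" "alternate w b d" using BB_alt[OF ne2(1) bb(1)] BB_alt[OF ne2(2) bb(2)] by simp_all
    then have "T9_E a c" "T9_E b d" using rep V ne2 by simp_all
    then show False using ne by blast
  qed
  have inj: "f a \<noteq> f b" if "a \<in> T9_V" "b \<in> T9_V" "a \<noteq> b" for a b
    using fo_inj sw that unfolding f_def by metis
  have i1_2: "f 1 \<noteq> f 2" by (rule inj) (simp_all add: V10)
  have i1_3: "f 1 \<noteq> f 3" by (rule inj) (simp_all add: V10)
  have i1_4: "f 1 \<noteq> f 4" by (rule inj) (simp_all add: V10)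
  have i1_5: "f 1 \<noteq> f 5" by (rule inj) (simp_all add: V10)
  have i1_6: "f 1 \<noteq> f 6" by (rule inj) (simp_all add: V10)
  have i1_7: "f 1 \<noteq> f 7" by (rule inj) (simp_all add: V10)
  have i1_8: "f 1 \<noteq> f 8" by (rule inj) (simp_all add: V10)
  have i1_9: "f 1 \<noteq> f 9" by (rule inj) (simp_all add: V10)
  have i1_10: "f 1 \<noteq> f 10" by (rule inj) (simp_all add: V10)
  have i2_3: "f 2 \<noteq> f 3" by (rule inj) (simp_all add: V10)
  have i2_4: "f 2 \<noteq> f 4" by (rule inj) (simp_all add: V10)
  have i2_5: "f 2 \<noteq> f 5" by (rule inj) (simp_all add: V10)
  have i2_6: "f 2 \<noteq> f 6" by (rule inj) (simp_all add: V10)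
  have i2_7: "f 2 \<noteq> f 7" by (rule inj) (simp_all add: V10)
  have i2_8: "f 2 \<noteq> f 8" by (rule inj) (simp_all add: V10)
  have i2_9: "f 2 \<noteq> f 9" by (rule inj) (simp_all add: V10)
  have i2_10: "f 2 \<noteq> f 10" by (rule inj) (simp_all add: V10)
  have i3_4: "f 3 \<noteq> f 4" by (rule inj) (simp_all add: V10)
  have i3_5: "f 3 \<noteq> f 5" by (rule inj) (simp_all add: V10)
  have i3_6: "f 3 \<noteq> f 6" by (rule inj) (simp_all add: V10)
  have i3_7: "f 3 \<noteq> f 7" by (rule inj) (simp_all add: V10)
  have i3_8: "f 3 \<noteq> f 8" by (rule inj) (simp_all add: V10)
  have i3_9: "f 3 \<noteq> f 9" by (rule inj) (simp_all add: V10)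
  have i3_10: "f 3 \<noteq> f 10" by (rule inj) (simp_all add: V10)
  have i4_5: "f 4 \<noteq> f 5" by (rule inj) (simp_all add: V10)
  have i4_6: "f 4 \<noteq> f 6" by (rule inj) (simp_all add: V10)
  have i4_7: "f 4 \<noteq> f 7" by (rule inj) (simp_all add: V10)
  have i4_8: "f 4 \<noteq> f 8" by (rule inj) (simp_all add: V10)
  have i4_9: "f 4 \<noteq> f 9" by (rule inj) (simp_all add: V10)
  have i4_10: "f 4 \<noteq> f 10" by (rule inj) (simp_all add: V10)
  have i5_6: "f 5 \<noteq> f 6" by (rule inj) (simp_all add: V10)
  have i5_7: "f 5 \<noteq> f 7" by (rule inj) (simp_all add: V10)
  have i5_8: "f 5 \<noteq> f 8" by (rule inj) (simp_all add: V10)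
  have i5_9: "f 5 \<noteq> f 9" by (rule inj) (simp_all add: V10)
  have i5_10: "f 5 \<noteq> f 10" by (rule inj) (simp_all add: V10)
  have i6_7: "f 6 \<noteq> f 7" by (rule inj) (simp_all add: V10)
  have i6_8: "f 6 \<noteq> f 8" by (rule inj) (simp_all add: V10)
  have i6_9: "f 6 \<noteq> f 9" by (rule inj) (simp_all add: V10)
  have i6_10: "f 6 \<noteq> f 10" by (rule inj) (simp_all add: V10)
  have i7_8: "f 7 \<noteq> f 8" by (rule inj) (simp_all add: V10)
  have i7_9: "f 7 \<noteq> f 9" by (rule inj) (simp_all add: V10)
  have i7_10: "f 7 \<noteq> f 10" by (rule inj) (simp_all add: V10)
  have i8_9: "f 8 \<noteq> f 9" by (rule inj) (simp_all add: V10)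
  have i8_10: "f 8 \<noteq> f 10" by (rule inj) (simp_all add: V10)
  have i9_10: "f 9 \<noteq> f 10" by (rule inj) (simp_all add: V10)
  have p0: "\<not> (f 1 < f 2 \<and> f 2 < f 4 \<and> f 4 < f 7)" by (rule key) (simp_all add: V10)
  have p1: "\<not> (f 1 < f 2 \<and> f 2 < f 5 \<and> f 5 < f 10)" by (rule key) (simp_all add: V10)
  have p2: "\<not> (f 1 < f 2 \<and> f 2 < f 8 \<and> f 8 < f 3)" by (rule key) (simp_all add: V10)
  have p3: "\<not> (f 1 < f 3 \<and> f 3 < f 4 \<and> f 4 < f 7)" by (rule key) (simp_all add: V10)
  have p4: "\<not> (f 1 < f 3 \<and> f 3 < f 8 \<and> f 8 < f 2)" by (rule key) (simp_all add: V10)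
  have p5: "\<not> (f 1 < f 4 \<and> f 4 < f 3 \<and> f 3 < f 6)" by (rule key) (simp_all add: V10)
  have p6: "\<not> (f 1 < f 5 \<and> f 5 < f 3 \<and> f 3 < f 6)" by (rule key) (simp_all add: V10)
  have p7: "\<not> (f 1 < f 5 \<and> f 5 < f 4 \<and> f 4 < f 7)" by (rule key) (simp_all add: V10)
  have p8: "\<not> (f 1 < f 6 \<and> f 6 < f 3 \<and> f 3 < f 2)" by (rule key) (simp_all add: V10)
  have p9: "\<not> (f 1 < f 6 \<and> f 6 < f 3 \<and> f 3 < f 4)" by (rule key) (simp_all add: V10)
  have p10: "\<not> (f 1 < f 6 \<and> f 6 < f 3 \<and> f 3 < f 5)" by (rule key) (simp_all add: V10)
  have p11: "\<not> (f 1 < f 6 \<and> f 6 < f 3 \<and> f 3 < f 9)" by (rule key) (simp_all add: V10)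
  have p12: "\<not> (f 1 < f 7 \<and> f 7 < f 4 \<and> f 4 < f 3)" by (rule key) (simp_all add: V10)
  have p13: "\<not> (f 1 < f 7 \<and> f 7 < f 4 \<and> f 4 < f 5)" by (rule key) (simp_all add: V10)
  have p14: "\<not> (f 1 < f 9 \<and> f 9 < f 3 \<and> f 3 < f 6)" by (rule key) (simp_all add: V10)
  have p15: "\<not> (f 1 < f 9 \<and> f 9 < f 5 \<and> f 5 < f 4)" by (rule key) (simp_all add: V10)
  have p16: "\<not> (f 1 < f 9 \<and> f 9 < f 5 \<and> f 5 < f 10)" by (rule key) (simp_all add: V10)
  have p17: "\<not> (f 1 < f 10 \<and> f 10 < f 4 \<and> f 4 < f 7)" by (rule key) (simp_all add: V10)
  have p18: "\<not> (f 1 < f 10 \<and> f 10 < f 5 \<and> f 5 < f 2)" by (rule key) (simp_all add: V10)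
  have p19: "\<not> (f 1 < f 10 \<and> f 10 < f 5 \<and> f 5 < f 9)" by (rule key) (simp_all add: V10)
  have p20: "\<not> (f 2 < f 1 \<and> f 1 < f 3 \<and> f 3 < f 8)" by (rule key) (simp_all add: V10)
  have p21: "\<not> (f 2 < f 1 \<and> f 1 < f 6 \<and> f 6 < f 3)" by (rule key) (simp_all add: V10)
  have p22: "\<not> (f 2 < f 1 \<and> f 1 < f 7 \<and> f 7 < f 4)" by (rule key) (simp_all add: V10)
  have p23: "\<not> (f 2 < f 1 \<and> f 1 < f 10 \<and> f 10 < f 4)" by (rule key) (simp_all add: V10)
  have p24: "\<not> (f 2 < f 1 \<and> f 1 < f 10 \<and> f 10 < f 5)" by (rule key) (simp_all add: V10)
  have p25: "\<not> (f 2 < f 4 \<and> f 4 < f 3 \<and> f 3 < f 8)" by (rule key) (simp_all add: V10)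
  have p26: "\<not> (f 2 < f 4 \<and> f 4 < f 5 \<and> f 5 < f 9)" by (rule key) (simp_all add: V10)
  have p27: "\<not> (f 2 < f 4 \<and> f 4 < f 7 \<and> f 7 < f 1)" by (rule key) (simp_all add: V10)
  have p28: "\<not> (f 2 < f 4 \<and> f 4 < f 10 \<and> f 10 < f 5)" by (rule key) (simp_all add: V10)
  have p29: "\<not> (f 2 < f 5 \<and> f 5 < f 3 \<and> f 3 < f 8)" by (rule key) (simp_all add: V10)
  have p30: "\<not> (f 2 < f 5 \<and> f 5 < f 10 \<and> f 10 < f 1)" by (rule key) (simp_all add: V10)
  have p31: "\<not> (f 2 < f 5 \<and> f 5 < f 10 \<and> f 10 < f 3)" by (rule key) (simp_all add: V10)
  have p32: "\<not> (f 2 < f 5 \<and> f 5 < f 10 \<and> f 10 < f 4)" by (rule key) (simp_all add: V10)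
  have p33: "\<not> (f 2 < f 8 \<and> f 8 < f 3 \<and> f 3 < f 4)" by (rule key) (simp_all add: V10)
  have p34: "\<not> (f 2 < f 8 \<and> f 8 < f 3 \<and> f 3 < f 5)" by (rule key) (simp_all add: V10)
  have p35: "\<not> (f 2 < f 8 \<and> f 8 < f 3 \<and> f 3 < f 9)" by (rule key) (simp_all add: V10)
  have p36: "\<not> (f 2 < f 9 \<and> f 9 < f 3 \<and> f 3 < f 8)" by (rule key) (simp_all add: V10)
  have p37: "\<not> (f 3 < f 1 \<and> f 1 < f 2 \<and> f 2 < f 8)" by (rule key) (simp_all add: V10)
  have p38: "\<not> (f 3 < f 1 \<and> f 1 < f 7 \<and> f 7 < f 4)" by (rule key) (simp_all add: V10)
  have p39: "\<not> (f 3 < f 4 \<and> f 4 < f 1 \<and> f 1 < f 6)" by (rule key) (simp_all add: V10)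
  have p40: "\<not> (f 3 < f 4 \<and> f 4 < f 1 \<and> f 1 < f 9)" by (rule key) (simp_all add: V10)
  have p41: "\<not> (f 3 < f 4 \<and> f 4 < f 2 \<and> f 2 < f 8)" by (rule key) (simp_all add: V10)
  have p42: "\<not> (f 3 < f 4 \<and> f 4 < f 5 \<and> f 5 < f 9)" by (rule key) (simp_all add: V10)
  have p43: "\<not> (f 3 < f 4 \<and> f 4 < f 7 \<and> f 7 < f 1)" by (rule key) (simp_all add: V10)
  have p44: "\<not> (f 3 < f 5 \<and> f 5 < f 1 \<and> f 1 < f 6)" by (rule key) (simp_all add: V10)
  have p45: "\<not> (f 3 < f 5 \<and> f 5 < f 2 \<and> f 2 < f 8)" by (rule key) (simp_all add: V10)
  have p46: "\<not> (f 3 < f 6 \<and> f 6 < f 1 \<and> f 1 < f 2)" by (rule key) (simp_all add: V10)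
  have p47: "\<not> (f 3 < f 6 \<and> f 6 < f 1 \<and> f 1 < f 4)" by (rule key) (simp_all add: V10)
  have p48: "\<not> (f 3 < f 6 \<and> f 6 < f 1 \<and> f 1 < f 5)" by (rule key) (simp_all add: V10)
  have p49: "\<not> (f 3 < f 6 \<and> f 6 < f 1 \<and> f 1 < f 9)" by (rule key) (simp_all add: V10)
  have p50: "\<not> (f 3 < f 6 \<and> f 6 < f 1 \<and> f 1 < f 10)" by (rule key) (simp_all add: V10)
  have p51: "\<not> (f 3 < f 8 \<and> f 8 < f 2 \<and> f 2 < f 1)" by (rule key) (simp_all add: V10)
  have p52: "\<not> (f 3 < f 8 \<and> f 8 < f 2 \<and> f 2 < f 5)" by (rule key) (simp_all add: V10)
  have p53: "\<not> (f 3 < f 8 \<and> f 8 < f 2 \<and> f 2 < f 9)" by (rule key) (simp_all add: V10)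
  have p54: "\<not> (f 3 < f 9 \<and> f 9 < f 1 \<and> f 1 < f 6)" by (rule key) (simp_all add: V10)
  have p55: "\<not> (f 3 < f 9 \<and> f 9 < f 5 \<and> f 5 < f 4)" by (rule key) (simp_all add: V10)
  have p56: "\<not> (f 3 < f 9 \<and> f 9 < f 5 \<and> f 5 < f 10)" by (rule key) (simp_all add: V10)
  have p57: "\<not> (f 3 < f 10 \<and> f 10 < f 5 \<and> f 5 < f 2)" by (rule key) (simp_all add: V10)
  have p58: "\<not> (f 3 < f 10 \<and> f 10 < f 5 \<and> f 5 < f 9)" by (rule key) (simp_all add: V10)
  have p59: "\<not> (f 4 < f 1 \<and> f 1 < f 9 \<and> f 9 < f 5)" by (rule key) (simp_all add: V10)
  have p60: "\<not> (f 4 < f 2 \<and> f 2 < f 1 \<and> f 1 < f 10)" by (rule key) (simp_all add: V10)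
  have p61: "\<not> (f 4 < f 2 \<and> f 2 < f 3 \<and> f 3 < f 10)" by (rule key) (simp_all add: V10)
  have p62: "\<not> (f 4 < f 2 \<and> f 2 < f 5 \<and> f 5 < f 10)" by (rule key) (simp_all add: V10)
  have p63: "\<not> (f 4 < f 2 \<and> f 2 < f 8 \<and> f 8 < f 3)" by (rule key) (simp_all add: V10)
  have p64: "\<not> (f 4 < f 2 \<and> f 2 < f 9 \<and> f 9 < f 1)" by (rule key) (simp_all add: V10)
  have p65: "\<not> (f 4 < f 2 \<and> f 2 < f 9 \<and> f 9 < f 3)" by (rule key) (simp_all add: V10)
  have p66: "\<not> (f 4 < f 3 \<and> f 3 < f 1 \<and> f 1 < f 7)" by (rule key) (simp_all add: V10)
  have p67: "\<not> (f 4 < f 3 \<and> f 3 < f 6 \<and> f 6 < f 1)" by (rule key) (simp_all add: V10)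
  have p68: "\<not> (f 4 < f 3 \<and> f 3 < f 8 \<and> f 8 < f 2)" by (rule key) (simp_all add: V10)
  have p69: "\<not> (f 4 < f 3 \<and> f 3 < f 9 \<and> f 9 < f 1)" by (rule key) (simp_all add: V10)
  have p70: "\<not> (f 4 < f 3 \<and> f 3 < f 9 \<and> f 9 < f 2)" by (rule key) (simp_all add: V10)
  have p71: "\<not> (f 4 < f 5 \<and> f 5 < f 1 \<and> f 1 < f 7)" by (rule key) (simp_all add: V10)
  have p72: "\<not> (f 4 < f 5 \<and> f 5 < f 9 \<and> f 9 < f 1)" by (rule key) (simp_all add: V10)
  have p73: "\<not> (f 4 < f 5 \<and> f 5 < f 9 \<and> f 9 < f 2)" by (rule key) (simp_all add: V10)
  have p74: "\<not> (f 4 < f 5 \<and> f 5 < f 9 \<and> f 9 < f 3)" by (rule key) (simp_all add: V10)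
  have p75: "\<not> (f 4 < f 7 \<and> f 7 < f 1 \<and> f 1 < f 2)" by (rule key) (simp_all add: V10)
  have p76: "\<not> (f 4 < f 7 \<and> f 7 < f 1 \<and> f 1 < f 5)" by (rule key) (simp_all add: V10)
  have p77: "\<not> (f 4 < f 7 \<and> f 7 < f 1 \<and> f 1 < f 10)" by (rule key) (simp_all add: V10)
  have p78: "\<not> (f 4 < f 10 \<and> f 10 < f 1 \<and> f 1 < f 7)" by (rule key) (simp_all add: V10)
  have p79: "\<not> (f 4 < f 10 \<and> f 10 < f 5 \<and> f 5 < f 2)" by (rule key) (simp_all add: V10)
  have p80: "\<not> (f 5 < f 1 \<and> f 1 < f 6 \<and> f 6 < f 3)" by (rule key) (simp_all add: V10)
  have p81: "\<not> (f 5 < f 1 \<and> f 1 < f 7 \<and> f 7 < f 4)" by (rule key) (simp_all add: V10)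
  have p82: "\<not> (f 5 < f 2 \<and> f 2 < f 1 \<and> f 1 < f 10)" by (rule key) (simp_all add: V10)
  have p83: "\<not> (f 5 < f 2 \<and> f 2 < f 4 \<and> f 4 < f 10)" by (rule key) (simp_all add: V10)
  have p84: "\<not> (f 5 < f 2 \<and> f 2 < f 8 \<and> f 8 < f 3)" by (rule key) (simp_all add: V10)
  have p85: "\<not> (f 5 < f 3 \<and> f 3 < f 6 \<and> f 6 < f 1)" by (rule key) (simp_all add: V10)
  have p86: "\<not> (f 5 < f 3 \<and> f 3 < f 8 \<and> f 8 < f 2)" by (rule key) (simp_all add: V10)
  have p87: "\<not> (f 5 < f 4 \<and> f 4 < f 2 \<and> f 2 < f 9)" by (rule key) (simp_all add: V10)
  have p88: "\<not> (f 5 < f 4 \<and> f 4 < f 3 \<and> f 3 < f 9)" by (rule key) (simp_all add: V10)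
  have p89: "\<not> (f 5 < f 4 \<and> f 4 < f 7 \<and> f 7 < f 1)" by (rule key) (simp_all add: V10)
  have p90: "\<not> (f 5 < f 9 \<and> f 9 < f 1 \<and> f 1 < f 4)" by (rule key) (simp_all add: V10)
  have p91: "\<not> (f 5 < f 9 \<and> f 9 < f 1 \<and> f 1 < f 10)" by (rule key) (simp_all add: V10)
  have p92: "\<not> (f 5 < f 9 \<and> f 9 < f 3 \<and> f 3 < f 4)" by (rule key) (simp_all add: V10)
  have p93: "\<not> (f 5 < f 9 \<and> f 9 < f 3 \<and> f 3 < f 10)" by (rule key) (simp_all add: V10)
  have p94: "\<not> (f 5 < f 10 \<and> f 10 < f 1 \<and> f 1 < f 2)" by (rule key) (simp_all add: V10)
  have p95: "\<not> (f 5 < f 10 \<and> f 10 < f 1 \<and> f 1 < f 9)" by (rule key) (simp_all add: V10)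
  have p96: "\<not> (f 5 < f 10 \<and> f 10 < f 3 \<and> f 3 < f 9)" by (rule key) (simp_all add: V10)
  have p97: "\<not> (f 5 < f 10 \<and> f 10 < f 4 \<and> f 4 < f 2)" by (rule key) (simp_all add: V10)
  have p98: "\<not> (f 6 < f 1 \<and> f 1 < f 4 \<and> f 4 < f 3)" by (rule key) (simp_all add: V10)
  have p99: "\<not> (f 6 < f 1 \<and> f 1 < f 5 \<and> f 5 < f 3)" by (rule key) (simp_all add: V10)
  have p100: "\<not> (f 6 < f 1 \<and> f 1 < f 9 \<and> f 9 < f 3)" by (rule key) (simp_all add: V10)
  have p101: "\<not> (f 6 < f 3 \<and> f 3 < f 4 \<and> f 4 < f 1)" by (rule key) (simp_all add: V10)
  have p102: "\<not> (f 6 < f 3 \<and> f 3 < f 5 \<and> f 5 < f 1)" by (rule key) (simp_all add: V10)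
  have p103: "\<not> (f 6 < f 3 \<and> f 3 < f 9 \<and> f 9 < f 1)" by (rule key) (simp_all add: V10)
  have p104: "\<not> (f 7 < f 1 \<and> f 1 < f 2 \<and> f 2 < f 4)" by (rule key) (simp_all add: V10)
  have p105: "\<not> (f 7 < f 1 \<and> f 1 < f 3 \<and> f 3 < f 4)" by (rule key) (simp_all add: V10)
  have p106: "\<not> (f 7 < f 1 \<and> f 1 < f 5 \<and> f 5 < f 4)" by (rule key) (simp_all add: V10)
  have p107: "\<not> (f 7 < f 1 \<and> f 1 < f 10 \<and> f 10 < f 4)" by (rule key) (simp_all add: V10)
  have p108: "\<not> (f 7 < f 4 \<and> f 4 < f 2 \<and> f 2 < f 1)" by (rule key) (simp_all add: V10)
  have p109: "\<not> (f 7 < f 4 \<and> f 4 < f 5 \<and> f 5 < f 1)" by (rule key) (simp_all add: V10)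
  have p110: "\<not> (f 7 < f 4 \<and> f 4 < f 10 \<and> f 10 < f 1)" by (rule key) (simp_all add: V10)
  have p111: "\<not> (f 8 < f 2 \<and> f 2 < f 1 \<and> f 1 < f 3)" by (rule key) (simp_all add: V10)
  have p112: "\<not> (f 8 < f 2 \<and> f 2 < f 4 \<and> f 4 < f 3)" by (rule key) (simp_all add: V10)
  have p113: "\<not> (f 8 < f 2 \<and> f 2 < f 5 \<and> f 5 < f 3)" by (rule key) (simp_all add: V10)
  have p114: "\<not> (f 8 < f 2 \<and> f 2 < f 9 \<and> f 9 < f 3)" by (rule key) (simp_all add: V10)
  have p115: "\<not> (f 8 < f 3 \<and> f 3 < f 4 \<and> f 4 < f 2)" by (rule key) (simp_all add: V10)
  have p116: "\<not> (f 8 < f 3 \<and> f 3 < f 5 \<and> f 5 < f 2)" by (rule key) (simp_all add: V10)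
  have p117: "\<not> (f 9 < f 1 \<and> f 1 < f 6 \<and> f 6 < f 3)" by (rule key) (simp_all add: V10)
  have p118: "\<not> (f 9 < f 1 \<and> f 1 < f 10 \<and> f 10 < f 5)" by (rule key) (simp_all add: V10)
  have p119: "\<not> (f 9 < f 2 \<and> f 2 < f 4 \<and> f 4 < f 5)" by (rule key) (simp_all add: V10)
  have p120: "\<not> (f 9 < f 3 \<and> f 3 < f 4 \<and> f 4 < f 5)" by (rule key) (simp_all add: V10)
  have p121: "\<not> (f 9 < f 3 \<and> f 3 < f 8 \<and> f 8 < f 2)" by (rule key) (simp_all add: V10)
  have p122: "\<not> (f 9 < f 3 \<and> f 3 < f 10 \<and> f 10 < f 5)" by (rule key) (simp_all add: V10)
  have p123: "\<not> (f 9 < f 5 \<and> f 5 < f 4 \<and> f 4 < f 1)" by (rule key) (simp_all add: V10)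
  have p124: "\<not> (f 9 < f 5 \<and> f 5 < f 4 \<and> f 4 < f 2)" by (rule key) (simp_all add: V10)
  have p125: "\<not> (f 9 < f 5 \<and> f 5 < f 4 \<and> f 4 < f 3)" by (rule key) (simp_all add: V10)
  have p126: "\<not> (f 9 < f 5 \<and> f 5 < f 10 \<and> f 10 < f 1)" by (rule key) (simp_all add: V10)
  have p127: "\<not> (f 10 < f 1 \<and> f 1 < f 2 \<and> f 2 < f 5)" by (rule key) (simp_all add: V10)
  have p128: "\<not> (f 10 < f 1 \<and> f 1 < f 6 \<and> f 6 < f 3)" by (rule key) (simp_all add: V10)
  have p129: "\<not> (f 10 < f 1 \<and> f 1 < f 7 \<and> f 7 < f 4)" by (rule key) (simp_all add: V10)
  have p130: "\<not> (f 10 < f 1 \<and> f 1 < f 9 \<and> f 9 < f 5)" by (rule key) (simp_all add: V10)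
  have p131: "\<not> (f 10 < f 3 \<and> f 3 < f 6 \<and> f 6 < f 1)" by (rule key) (simp_all add: V10)
  have p132: "\<not> (f 10 < f 3 \<and> f 3 < f 9 \<and> f 9 < f 5)" by (rule key) (simp_all add: V10)
  have p133: "\<not> (f 10 < f 4 \<and> f 4 < f 2 \<and> f 2 < f 5)" by (rule key) (simp_all add: V10)
  have p134: "\<not> (f 10 < f 4 \<and> f 4 < f 7 \<and> f 7 < f 1)" by (rule key) (simp_all add: V10)
  have p135: "\<not> (f 10 < f 5 \<and> f 5 < f 2 \<and> f 2 < f 1)" by (rule key) (simp_all add: V10)
  have p136: "\<not> (f 10 < f 5 \<and> f 5 < f 2 \<and> f 2 < f 4)" by (rule key) (simp_all add: V10)
  have p137: "\<not> (f 10 < f 5 \<and> f 5 < f 9 \<and> f 9 < f 1)" by (rule key) (simp_all add: V10)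
  have p138: "\<not> (f 10 < f 5 \<and> f 5 < f 9 \<and> f 9 < f 3)" by (rule key) (simp_all add: V10)
  show False by (rule fin_order[OF i1_2 i1_3 i1_4 i1_5 i1_6 i1_7 i1_8 i1_9 i1_10 i2_3 i2_4 i2_5 i2_6 i2_7 i2_8 i2_9 i2_10 i3_4 i3_5 i3_6 i3_7 i3_8 i3_9 i3_10 i4_5 i4_6 i4_7 i4_8 i4_9 i4_10 i5_6 i5_7 i5_8 i5_9 i5_10 i6_7 i6_8 i6_9 i6_10 i7_8 i7_9 i7_10 i8_9 i8_10 i9_10 p0 p1 p2 p3 p4 p5 p6 p7 p8 p9 p10 p11 p12 p13 p14 p15 p16 p17 p18 p19 p20 p21 p22 p23 p24 p25 p26 p27 p28 p29 p30 p31 p32 p33 p34 p35 p36 p37 p38 p39 p40 p41 p42 p43 p44 p45 p46 p47 p48 p49 p50 p51 p52 p53 p54 p55 p56 p57 p58 p59 p60 p61 p62 p63 p64 p65 p66 p67 p68 p69 p70 p71 p72 p73 p74 p75 p76 p77 p78 p79 p80 p81 p82 p83 p84 p85 p86 p87 p88 p89 p90 p91 p92 p93 p94 p95 p96 p97 p98 p99 p100 p101 p102 p103 p104 p105 p106 p107 p108 p109 p110 p111 p112 p113 p114 p115 p116 p117 p118 p119 p120 p121 p122 p123 p124 p125 p126 p127 p128 p129 p130 p131 p132 p133 p134 p135 p136 p137 p138])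
qed



fun adjd :: "'a list \<Rightarrow> bool" where
  "adjd (a # b # xs) = (a \<noteq> b \<and> adjd (b # xs))"
| "adjd _ = True"

lemma adjd_iff: "adjd u \<longleftrightarrow> (\<forall>i. Suc i < length u \<longrightarrow> u ! i \<noteq> u ! Suc i)"
proof (induction u rule: adjd.induct)
  case (1 a b xs)
  show ?case
  proof
    assume "adjd (a # b # xs)"
    then have ab: "a \<noteq> b" and r: "\<forall>i. Suc i < length (b # xs) \<longrightarrow> (b # xs) ! i \<noteq> (b # xs) ! Suc i"
      using 1 by auto
    show "\<forall>i. Suc i < length (a # b # xs) \<longrightarrow> (a # b # xs) ! i \<noteq> (a # b # xs) ! Suc i"
    proof (intro allI impI)
      fix i assume "Suc i < length (a # b # xs)"
      then show "(a # b # xs) ! i \<noteq> (a # b # xs) ! Suc i"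
        using ab r by (cases i) auto
    qed
  next
    assume h: "\<forall>i. Suc i < length (a # b # xs) \<longrightarrow> (a # b # xs) ! i \<noteq> (a # b # xs) ! Suc i"
    have "a \<noteq> b" using h[rule_format, of 0] by simp
    moreover have "\<forall>i. Suc i < length (b # xs) \<longrightarrow> (b # xs) ! i \<noteq> (b # xs) ! Suc i"
      using h[rule_format, of "Suc _"] by auto
    ultimately show "adjd (a # b # xs)" using 1 by simp
  qed
next
  case "2_1"
  then show ?case by simp
next
  case ("2_2" v)
  then show ?case by simp
qed

lemma alt_code: "alternate w x y = adjd (filter (\<lambda>z. z = x \<or> z = y) w)"
  by (simp add: alternate_def adjd_iff Let_def)

lemma rep1: "word_representable (T9_V - {1}) T9_E"
proof -
  have V: "T9_V - {1} = {2,3,4,5,6,7,8,9,10}" by (auto simp: V10)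
  show ?thesis unfolding word_representable_def V
    apply (rule exI[of _ "[10, 9, 8, 2, 6, 3, 6, 8, 5, 9, 7, 4, 7, 2, 10, 3, 5, 4]"])
    apply (rule conjI)
     apply auto[1]
    apply (simp only: ball_simps(5,7))
    apply (simp add: alt_code)
    done
qed

lemma rep2: "word_representable (T9_V - {2}) T9_E"
proof -
  have V: "T9_V - {2} = {1,3,4,5,6,7,8,9,10}" by (auto simp: V10)
  show ?thesis unfolding word_representable_def V
    apply (rule exI[of _ "[10, 9, 5, 6, 8, 3, 8, 1, 6, 9, 4, 10, 5, 3, 7, 1, 4, 7]"])
    apply (rule conjI)
     apply auto[1]
    apply (simp only: ball_simps(5,7))
    apply (simp add: alt_code)
    done
qed

lemma rep3: "word_representable (T9_V - {3}) T9_E"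
proof -
  have V: "T9_V - {3} = {1,2,4,5,6,7,8,9,10}" by (auto simp: V10)
  show ?thesis unfolding word_representable_def V
    apply (rule exI[of _ "[7, 10, 9, 8, 2, 8, 5, 6, 1, 6, 9, 4, 2, 10, 5, 7, 1, 4]"])
    apply (rule conjI)
     apply auto[1]
    apply (simp only: ball_simps(5,7))
    apply (simp add: alt_code)
    done
qed

lemma rep4: "word_representable (T9_V - {4}) T9_E"
proof -
  have V: "T9_V - {4} = {1,2,3,5,6,7,8,9,10}" by (auto simp: V10)
  show ?thesis unfolding word_representable_def V
    apply (rule exI[of _ "[10, 9, 8, 2, 3, 8, 1, 5, 9, 2, 10, 6, 3, 7, 1, 7, 6, 5]"])
    apply (rule conjI)
     apply auto[1]
    apply (simp only: ball_simps(5,7))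
    apply (simp add: alt_code)
    done
qed

lemma rep5: "word_representable (T9_V - {5}) T9_E"
proof -
  have V: "T9_V - {5} = {1,2,3,4,6,7,8,9,10}" by (auto simp: V10)
  show ?thesis unfolding word_representable_def V
    apply (rule exI[of _ "[9, 7, 10, 4, 6, 1, 8, 3, 10, 2, 8, 6, 7, 4, 9, 1, 7, 3, 6, 2, 8, 9, 10, 4, 1, 3, 2]"])
    apply (rule conjI)
     apply auto[1]
    apply (simp only: ball_simps(5,7))
    apply (simp add: alt_code)
    done
qed

lemma rep6: "word_representable (T9_V - {6}) T9_E"
proof -
  have V: "T9_V - {6} = {1,2,3,4,5,7,8,9,10}" by (auto simp: V10)
  show ?thesis unfolding word_representable_def V
    apply (rule exI[of _ "[7, 10, 9, 8, 2, 3, 8, 5, 1, 9, 4, 2, 10, 3, 5, 7, 1, 4]"])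
    apply (rule conjI)
     apply auto[1]
    apply (simp only: ball_simps(5,7))
    apply (simp add: alt_code)
    done
qed

lemma rep7: "word_representable (T9_V - {7}) T9_E"
proof -
  have V: "T9_V - {7} = {1,2,3,4,5,6,8,9,10}" by (auto simp: V10)
  show ?thesis unfolding word_representable_def V
    apply (rule exI[of _ "[6, 10, 2, 4, 9, 5, 1, 8, 3, 2, 8, 9, 10, 4, 5, 6, 1, 3]"])
    apply (rule conjI)
     apply auto[1]
    apply (simp only: ball_simps(5,7))
    apply (simp add: alt_code)
    done
qed

lemma rep8: "word_representable (T9_V - {8}) T9_E"
proof -
  have V: "T9_V - {8} = {1,2,3,4,5,6,7,9,10}" by (auto simp: V10)
  show ?thesis unfolding word_representable_def V
    apply (rule exI[of _ "[7, 10, 9, 2, 5, 6, 3, 1, 6, 9, 4, 2, 10, 5, 3, 7, 1, 4]"])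
    apply (rule conjI)
     apply auto[1]
    apply (simp only: ball_simps(5,7))
    apply (simp add: alt_code)
    done
qed

lemma rep9: "word_representable (T9_V - {9}) T9_E"
proof -
  have V: "T9_V - {9} = {1,2,3,4,5,6,7,8,10}" by (auto simp: V10)
  show ?thesis unfolding word_representable_def V
    apply (rule exI[of _ "[6, 10, 2, 5, 7, 4, 1, 7, 8, 3, 2, 8, 10, 5, 4, 6, 1, 3]"])
    apply (rule conjI)
     apply auto[1]
    apply (simp only: ball_simps(5,7))
    apply (simp add: alt_code)
    done
qed

lemma rep10: "word_representable (T9_V - {10}) T9_E"
proof -
  have V: "T9_V - {10} = {1,2,3,4,5,6,7,8,9}" by (auto simp: V10)
  show ?thesis unfolding word_representable_def V
    apply (rule exI[of _ "[1, 7, 8, 3, 2, 8, 5, 4, 9, 6, 1, 3, 6, 2, 5, 9, 7, 4]"])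
    apply (rule conjI)
     apply auto[1]
    apply (simp only: ball_simps(5,7))
    apply (simp add: alt_code)
    done
qed

lemma T9_part2: "\<forall>v\<in>T9_V. word_representable (T9_V - {v}) T9_E"
  using rep1 rep2 rep3 rep4 rep5 rep6 rep7 rep8 rep9 rep10 unfolding V10 by blast


theorem theorem17:
  shows "\<not> word_representable T9_V T9_E \<and>
         (\<forall>v\<in>T9_V. word_representable (T9_V - {v}) T9_E)"
  using T9_part1 T9_part2 by blast

end
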